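(* Let $H_n=\{x\in\mathbb{R}^n: x_1=0\}$ and let $H_n^-=\{x_1\le 0\}$, $H_n^+=\{x_1\ge 0\}$. There exist absolute constants $C,c>0$ such that for every $\eta\in(0,1)$ there is a sequence of centrally symmetric star-shaped bodies $S_n\subseteq\mathbb{R}^n$ (with $S_n=-S_n$) and an integer $N_\eta$ such that for all $n\ge N_\eta$, $\eta(S_n)\ge c\,\eta$ and \[ \mathrm{vol}_{n-1}(H_n\cap S_n)\le C\left(\frac{\eta\ln(1/\eta)}{(1-\eta)\,\mathrm{Diam}(S_n)}\right)\min\{\mathrm{vol}_n(H_n^-\cap S_n),\ \mathrm{vol}_n(H_n^+\cap S_n)\}. \]
   Context: A compact body is a compact set with nonempty interior equal to the closure of its interior. $K_S=\{x\in S: [x,y]\subseteq S\ \forall y\in S\}$ is the kernel of $S$; $S$ is star-shaped if $K_S\ne\emptyset$; a star-shaped body is a compact body that is star-shaped; $\eta(S)=\mathrm{vol}(K_S)/\mathrm{vol}(S)$. $\mathrm{Diam}$ denotes the diameter and $\mathrm{vol}_k$ the $k$-dimensional volume. *)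

theory Defs
  imports "HOL-Analysis.Analysis"
begin

text \<open>R^n is modelled as the extensional function space PiE {..<n} UNIV
  (coordinates 0..n-1; the paper's x_1 is coordinate 0), with the Euclidean
  metric, its metric topology, and Lebesgue measure as the product measure
  of n copies of lborel.\<close>

definition Rn :: "nat \<Rightarrow> (nat \<Rightarrow> real) set" where
  "Rn n = PiE {..<n} (\<lambda>_. UNIV)"

definition edist :: "nat \<Rightarrow> (nat \<Rightarrow> real) \<Rightarrow> (nat \<Rightarrow> real) \<Rightarrow> real" where
  "edist n x y = sqrt (\<Sum>i<n. (x i - y i)^2)"

definition etop :: "nat \<Rightarrow> (nat \<Rightarrow> real) topology" where
  "etop n = Metric_space.mtopology (Rn n) (edist n)"

definition vol :: "nat \<Rightarrow> (nat \<Rightarrow> real) set \<Rightarrow> real" where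
  "vol n A = measure (Pi\<^sub>M {..<n} (\<lambda>_. lborel)) A"

definition vol_hyp :: "nat \<Rightarrow> (nat \<Rightarrow> real) set \<Rightarrow> real" where
  "vol_hyp n A = measure (Pi\<^sub>M {1..<n} (\<lambda>_. lborel))
      ((\<lambda>x. restrict x {1..<n}) ` {x \<in> A. x 0 = 0})"

definition Diam :: "nat \<Rightarrow> (nat \<Rightarrow> real) set \<Rightarrow> real" where
  "Diam n S = Sup {edist n x y | x y. x \<in> S \<and> y \<in> S}"

definition segment :: "nat \<Rightarrow> (nat \<Rightarrow> real) \<Rightarrow> (nat \<Rightarrow> real) \<Rightarrow> (nat \<Rightarrow> real) set" where
  "segment n x y = {restrict (\<lambda>i. (1 - t) * x i + t * y i) {..<n} | t. 0 \<le> t \<and> t \<le> 1}"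

definition kernel :: "nat \<Rightarrow> (nat \<Rightarrow> real) set \<Rightarrow> (nat \<Rightarrow> real) set" where
  "kernel n S = {x \<in> S. \<forall>y \<in> S. segment n x y \<subseteq> S}"

definition compact_body :: "nat \<Rightarrow> (nat \<Rightarrow> real) set \<Rightarrow> bool" where
  "compact_body n S \<longleftrightarrow> S \<subseteq> Rn n \<and> compactin (etop n) S \<and>
     etop n interior_of S \<noteq> {} \<and> S = etop n closure_of (etop n interior_of S)"

definition star_body :: "nat \<Rightarrow> (nat \<Rightarrow> real) set \<Rightarrow> bool" where
  "star_body n S \<longleftrightarrow> compact_body n S \<and> kernel n S \<noteq> {}"

definition eta :: "nat \<Rightarrow> (nat \<Rightarrow> real) set \<Rightarrow> real" where
  "eta n S = vol n (kernel n S) / vol n S"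

definition centrally_symmetric :: "nat \<Rightarrow> (nat \<Rightarrow> real) set \<Rightarrow> bool" where
  "centrally_symmetric n S \<longleftrightarrow> S = (\<lambda>x. restrict (\<lambda>i. - x i) {..<n}) ` S"

end

theory Submission
  imports Defs
begin


lemma edist_L2: "edist n x y = L2_set (\<lambda>i. x i - y i) {..<n}"
  by (simp add: edist_def L2_set_def)

lemma Rn_ext: "x \<in> Rn n \<Longrightarrow> y \<in> Rn n \<Longrightarrow> (\<And>i. i < n \<Longrightarrow> x i = y i) \<Longrightarrow> x = y"
  unfolding Rn_def by (rule PiE_ext) auto

lemma metric_Rn: "Metric_space (Rn n) (edist n)"
proof
  fix x y z
  show "0 \<le> edist n x y" by (simp add: edist_def sum_nonneg)
  show "edist n x y = edist n y x" unfolding edist_def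
    by (simp add: power2_commute)
  assume x: "x \<in> Rn n" and y: "y \<in> Rn n"
  show "(edist n x y = 0) = (x = y)"
  proof
    assume "edist n x y = 0"
    then have "\<forall>i\<in>{..<n}. x i - y i = 0" unfolding edist_L2 by (simp add: L2_set_eq_0_iff)
    then show "x = y" using Rn_ext[OF x y] by auto
  qed (simp add: edist_def)
  assume z: "z \<in> Rn n"
  have "edist n x z = L2_set (\<lambda>i. (x i - y i) + (y i - z i)) {..<n}" by (simp add: edist_L2)
  also have "\<dots> \<le> edist n x y + edist n y z" unfolding edist_L2 by (rule L2_set_triangle_ineq)
  finally show "edist n x z \<le> edist n x y + edist n y z" .
qed

lemma edist_coord: "i < n \<Longrightarrow> \<bar>x i - y i\<bar> \<le> edist n x y"
  unfolding edist_L2 using member_le_L2_set[of "{..<n}" i "\<lambda>i. \<bar>x i - y i\<bar>"]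
  by (simp add: L2_set_def)

lemma etop_eq: "etop n = Metric_space.mtopology (Rn n) (edist n)" by (simp add: etop_def)

lemma cont_id_etop: "continuous_map (product_topology (\<lambda>_. euclideanreal) {..<n}) (etop n) id"
proof -
  interpret M: Metric_space "Rn n" "edist n" by (rule metric_Rn)
  show ?thesis unfolding etop_def M.continuous_map_to_metric
  proof (intro ballI allI impI)
    fix x and e :: real assume x: "x \<in> topspace (product_topology (\<lambda>_. euclideanreal) {..<n})" and e: "e > 0"
    define r where "r = e / (real n + 1)"
    have r: "r > 0" using e by (simp add: r_def)
    let ?U = "PiE {..<n} (\<lambda>i. ball (x i) r)"
    show "\<exists>U. openin (product_topology (\<lambda>_. euclideanreal) {..<n}) U \<and> x \<in> U \<and> (\<forall>y\<in>U. id y \<in> M.mball (id x) e)"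
    proof (intro exI conjI ballI)
      show "openin (product_topology (\<lambda>_. euclideanreal) {..<n}) ?U"
        by (simp add: openin_PiE)
      show "x \<in> ?U" using x r by (auto simp: PiE_iff)
      fix y assume y: "y \<in> ?U"
      have xR: "x \<in> Rn n" using x by (simp add: Rn_def)
      have yR: "y \<in> Rn n" using y by (auto simp: Rn_def PiE_iff)
      have "edist n x y \<le> (\<Sum>i<n. \<bar>x i - y i\<bar>)" unfolding edist_L2 by (rule L2_set_le_sum_abs)
      also have "\<dots> \<le> (\<Sum>i<n. r)"
        apply (rule sum_mono) using y by (force simp: PiE_iff dist_real_def)
      also have "\<dots> = real n * r" by simp
      also have "\<dots> < e" using e by (simp add: r_def field_simps)
      finally show "id y \<in> M.mball (id x) e" using xR yR by simp
    qed
  qed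
qed




locale body =
  fixes n :: nat and L m c :: real
  assumes n2: "2 \<le> n" and c0: "0 < c" and cL: "c < L" and m0: "0 < m" and mc: "m * c \<le> 1/4"
begin

definition g :: "real \<Rightarrow> real" where "g s = 1 + m * max 0 (s - c)"
definition S where "S = {x \<in> Rn n. \<bar>x 0\<bar> \<le> L \<and> (\<forall>i\<in>{1..<n}. \<bar>x i\<bar> \<le> g \<bar>x 0\<bar>)}"

lemma g_ge1: "g s \<ge> 1" using m0 by (simp add: g_def)
lemma g_pos: "g s > 0" using g_ge1[of s] by linarith
lemma g_cont: "continuous_on UNIV g" unfolding g_def by (intro continuous_intros)

definition Psi :: "(nat \<Rightarrow> real) \<Rightarrow> (nat \<Rightarrow> real)" where
  "Psi u = restrict (\<lambda>i. if i = 0 then L * u 0 else g \<bar>L * u 0\<bar> * u i) {..<n}"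

lemma L0: "L > 0" using c0 cL by linarith
lemma n0: "0 < n" using n2 by linarith

lemma S_image: "S = Psi ` PiE {..<n} (\<lambda>_. {-1..1})"
proof
  show "Psi ` PiE {..<n} (\<lambda>_. {-1..1}) \<subseteq> S"
  proof
    fix x assume "x \<in> Psi ` PiE {..<n} (\<lambda>_. {-1..1})"
    then obtain u where u: "u \<in> PiE {..<n} (\<lambda>_. {-1..1})" and x: "x = Psi u" by blast
    have "u 0 \<in> {-1..1}" using u n0 by (auto simp: PiE_iff)
    then have u0: "\<bar>u 0\<bar> \<le> 1" by (simp add: abs_le_iff)
    have ui: "\<bar>u i\<bar> \<le> 1" if "i \<in> {1..<n}" for i
    proof -
      have "u i \<in> {-1..1}" using u that by (auto simp: PiE_iff)
      then show ?thesis by (simp add: abs_le_iff)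
    qed
    have "\<bar>L * u 0\<bar> \<le> L" using u0 L0 by (simp add: abs_mult mult_left_le)
    moreover have "\<bar>g \<bar>L * u 0\<bar> * u i\<bar> \<le> g \<bar>L * u 0\<bar>" if "i \<in> {1..<n}" for i
      using ui[OF that] g_pos[of "\<bar>L * u 0\<bar>"] by (simp add: abs_mult mult_left_le)
    ultimately show "x \<in> S" unfolding x S_def Psi_def Rn_def using n0 by auto
  qed
  show "S \<subseteq> Psi ` PiE {..<n} (\<lambda>_. {-1..1})"
  proof
    fix x assume x: "x \<in> S"
    define u where "u = restrict (\<lambda>i. if i = 0 then x 0 / L else x i / g \<bar>x 0\<bar>) {..<n}"
    have xR: "x \<in> Rn n" and x0: "\<bar>x 0\<bar> \<le> L" and xi: "\<And>i. i \<in> {1..<n} \<Longrightarrow> \<bar>x i\<bar> \<le> g \<bar>x 0\<bar>"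
      using x by (auto simp: S_def)
    have "u \<in> PiE {..<n} (\<lambda>_. {-1..1})"
    proof -
      have "\<bar>x 0 / L\<bar> \<le> 1" using x0 L0 by (metis abs_div_pos divide_le_eq_1_pos)
      moreover have "\<bar>x i / g \<bar>x 0\<bar>\<bar> \<le> 1" if "i \<in> {1..<n}" for i
        using xi[OF that] g_pos[of "\<bar>x 0\<bar>"] by (metis abs_div_pos divide_le_eq_1_pos)
      ultimately have A: "x 0 / L \<le> 1 \<and> -(x 0 / L) \<le> 1"
        and B: "\<And>i. i \<in> {1..<n} \<Longrightarrow> x i / g \<bar>x 0\<bar> \<le> 1 \<and> -(x i / g \<bar>x 0\<bar>) \<le> 1"
        by (simp_all only: abs_le_iff)
      have "u i \<in> {-1..1}" if "i < n" for i
      proof (cases "i = 0")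
        case True then show ?thesis using A that by (simp add: u_def)
      next
        case False then have "i \<in> {1..<n}" using that by simp
        then show ?thesis using B[of i] False that by (simp add: u_def)
      qed
      then show ?thesis unfolding u_def by (auto simp: PiE_iff)
    qed
    moreover have "Psi u = x"
    proof (rule Rn_ext[OF _ xR])
      show "Psi u \<in> Rn n" by (simp add: Psi_def Rn_def)
      fix i assume i: "i < n"
      have "L * (x 0 / L) = x 0" using L0 by simp
      then show "Psi u i = x i" using i n0 g_pos[of "\<bar>x 0\<bar>"] by (simp add: Psi_def u_def)
    qed
    ultimately show "x \<in> Psi ` PiE {..<n} (\<lambda>_. {-1..1})" by blast
  qed
qed

lemma Psi_cont: "continuous_map (product_topology (\<lambda>_. euclideanreal) {..<n}) (product_topology (\<lambda>_. euclideanreal) {..<n}) Psi"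
  unfolding continuous_map_componentwise
proof (intro conjI ballI)
  show "Psi ` topspace (product_topology (\<lambda>_. euclideanreal) {..<n}) \<subseteq> extensional {..<n}"
    by (auto simp: Psi_def)
  fix k :: nat assume k: "k \<in> {..<n}"
  let ?X = "product_topology (\<lambda>_. euclideanreal) {..<n}"
  have p0: "continuous_map ?X euclideanreal (\<lambda>x. x 0)" using n0 by (intro continuous_intros) auto
  have pk: "continuous_map ?X euclideanreal (\<lambda>x. x k)" using k by (intro continuous_intros) auto
  have gg: "continuous_map ?X euclideanreal (g \<circ> (\<lambda>x. \<bar>L * x 0\<bar>))"
    by (rule continuous_map_compose[where X'=euclideanreal]) (intro continuous_intros p0, simp add: g_cont)
  have "continuous_map ?X euclideanreal (\<lambda>x. if k = 0 then L * x 0 else g \<bar>L * x 0\<bar> * x k)"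
  proof (cases "k = 0")
    case True then show ?thesis using continuous_map_real_mult_left[OF p0, of L] by simp
  next
    case False
    have "continuous_map ?X euclideanreal (\<lambda>x. g \<bar>L * x 0\<bar> * x k)"
      using continuous_map_real_mult[OF gg pk] by (simp add: o_def)
    then show ?thesis using False by simp
  qed
  then show "continuous_map ?X euclideanreal (\<lambda>x. Psi x k)"
    using k by (simp add: Psi_def)
qed

lemma S_compact: "compactin (etop n) S"
proof -
  have "compactin (product_topology (\<lambda>_. euclideanreal) {..<n}) (PiE {..<n} (\<lambda>_. {-1..1::real}))"
    by (simp add: compactin_PiE)
  then have "compactin (etop n) (id ` Psi ` PiE {..<n} (\<lambda>_. {-1..1}))"
    by (intro image_compactin[OF image_compactin[OF _ Psi_cont]] cont_id_etop)
  then show ?thesis by (simp add: S_image)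
qed

lemma g_lip: "\<bar>g a - g b\<bar> \<le> m * \<bar>a - b\<bar>"
proof -
  have "\<bar>max 0 (a - c) - max 0 (b - c)\<bar> \<le> \<bar>a - b\<bar>" unfolding max_def by (auto simp: abs_if)
  then have "m * \<bar>max 0 (a - c) - max 0 (b - c)\<bar> \<le> m * \<bar>a - b\<bar>" using m0 by (simp add: mult_left_mono)
  then show ?thesis using m0 by (simp add: g_def abs_mult flip: right_diff_distrib)
qed

lemma S_sub: "S \<subseteq> Rn n" by (auto simp: S_def)

lemma int_pt:
  assumes xR: "x \<in> Rn n" and x0: "\<bar>x 0\<bar> < L" and xi: "\<And>i. i \<in> {1..<n} \<Longrightarrow> \<bar>x i\<bar> < g \<bar>x 0\<bar>"
  shows "x \<in> etop n interior_of S"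
proof -
  interpret M: Metric_space "Rn n" "edist n" by (rule metric_Rn)
  define s where "s = Min ((\<lambda>i. g \<bar>x 0\<bar> - \<bar>x i\<bar>) ` {1..<n})"
  have ne: "{1..<n} \<noteq> {}" using n2 by auto
  have s0: "s > 0" unfolding s_def using ne xi by (subst Min_gr_iff) auto
  have sle: "\<bar>x i\<bar> + s \<le> g \<bar>x 0\<bar>" if "i \<in> {1..<n}" for i
  proof -
    have "s \<le> g \<bar>x 0\<bar> - \<bar>x i\<bar>" unfolding s_def using that by (intro Min_le) auto
    then show ?thesis by simp
  qed
  define r where "r = min (L - \<bar>x 0\<bar>) (s / (1 + m))"
  have r0: "r > 0" using x0 s0 m0 by (simp add: r_def)
  have "r \<le> s / (1 + m)" by (simp add: r_def)
  then have rm: "r * (1 + m) \<le> s" using m0 by (simp add: le_divide_eq)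
  have "M.mball x r \<subseteq> S"
  proof
    fix y assume "y \<in> M.mball x r"
    then have yR: "y \<in> Rn n" and d: "edist n x y < r" by auto
    have c0': "\<bar>x 0 - y 0\<bar> < r" using edist_coord[of 0 n x y] n0 d by simp
    have y0: "\<bar>y 0\<bar> \<le> L" using c0' r_def by linarith
    have "\<bar>y i\<bar> \<le> g \<bar>y 0\<bar>" if i: "i \<in> {1..<n}" for i
    proof -
      have ci: "\<bar>x i - y i\<bar> < r" using edist_coord[of i n x y] i d by simp
      have "\<bar>g \<bar>x 0\<bar> - g \<bar>y 0\<bar>\<bar> \<le> m * \<bar>\<bar>x 0\<bar> - \<bar>y 0\<bar>\<bar>" by (rule g_lip)
      also have "\<dots> \<le> m * r" using c0' m0 by (intro mult_left_mono) auto
      finally have "g \<bar>y 0\<bar> \<ge> g \<bar>x 0\<bar> - m * r" by linarith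
      moreover have "\<bar>y i\<bar> < \<bar>x i\<bar> + r" using ci by linarith
      ultimately show ?thesis using sle[OF i] rm by (simp add: algebra_simps)
    qed
    then show "y \<in> S" using yR y0 by (simp add: S_def)
  qed
  then show ?thesis unfolding etop_def M.metric_interior_of using xR r0 by blast
qed

lemma scale_in:
  assumes x: "x \<in> S" and l0: "0 \<le> l" and l1: "l < 1"
  shows "restrict (\<lambda>i. l * x i) {..<n} \<in> etop n interior_of S"
proof (rule int_pt)
  have xR: "x \<in> Rn n" and x0: "\<bar>x 0\<bar> \<le> L" and xi: "\<And>i. i \<in> {1..<n} \<Longrightarrow> \<bar>x i\<bar> \<le> g \<bar>x 0\<bar>"
    using x by (auto simp: S_def)
  show "restrict (\<lambda>i. l * x i) {..<n} \<in> Rn n" by (simp add: Rn_def)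
  have "\<bar>l * x 0\<bar> \<le> l * L" using x0 l0 by (simp add: abs_mult mult_left_mono)
  also have "\<dots> < L" using l1 L0 by simp
  finally show "\<bar>restrict (\<lambda>i. l * x i) {..<n} 0\<bar> < L" using n0 by simp
  have key: "l * g t < g (l * t)" if "t \<ge> 0" for t
  proof (cases "t \<le> c")
    case True
    then have "g t = 1" by (simp add: g_def)
    moreover have "g (l * t) \<ge> 1" by (rule g_ge1)
    ultimately show ?thesis using l1 by simp
  next
    case False
    then have gt: "g t = 1 + m * (t - c)" by (simp add: g_def)
    have "g (l * t) \<ge> 1 + m * (l * t - c)" using m0 by (simp add: g_def mult_left_mono)
    moreover have "l * (1 + m * (t - c)) < 1 + m * (l * t - c)"
    proof -
      have "(1 - l) * (m * c - 1) < 0" using l1 mc by (intro mult_pos_neg) auto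
      then show ?thesis by (simp add: algebra_simps)
    qed
    ultimately show ?thesis using gt by simp
  qed
  fix i assume i: "i \<in> {1..<n}"
  have "\<bar>l * x i\<bar> \<le> l * g \<bar>x 0\<bar>" using xi[OF i] l0 by (simp add: abs_mult mult_left_mono)
  also have "\<dots> < g (l * \<bar>x 0\<bar>)" by (rule key) simp
  finally show "\<bar>restrict (\<lambda>i. l * x i) {..<n} i\<bar> < g \<bar>restrict (\<lambda>i. l * x i) {..<n} 0\<bar>"
    using i n0 l0 by (simp add: abs_mult)
qed

lemma S_compact_body: "compact_body n S"
proof -
  interpret M: Metric_space "Rn n" "edist n" by (rule metric_Rn)
  have closed: "closedin (etop n) S"
    using S_compact compactin_imp_closedin M.Hausdorff_space_mtopology by (simp add: etop_def)
  have z: "restrict (\<lambda>i. 0 * (restrict (\<lambda>_. 0::real) {..<n}) i) {..<n} \<in> etop n interior_of S"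
  proof (rule scale_in)
    show "restrict (\<lambda>_. 0::real) {..<n} \<in> S" unfolding S_def Rn_def using L0 n0 g_pos[of 0] by auto
  qed auto
  have "S \<subseteq> etop n closure_of (etop n interior_of S)"
  proof
    fix x assume x: "x \<in> S"
    then have xR: "x \<in> Rn n" by (simp add: S_def)
    show "x \<in> etop n closure_of (etop n interior_of S)"
      unfolding etop_def M.metric_closure_of
    proof (intro CollectI conjI allI impI xR)
      fix r :: real assume r: "r > 0"
      define R where "R = L2_set x {..<n}"
      have R0: "R \<ge> 0" by (simp add: R_def)
      define t where "t = min (1/2) (r / (R + 1))"
      have t0: "t > 0" using r R0 by (auto simp: t_def)
      have t1: "t \<le> 1/2" unfolding t_def by (rule min.cobounded1)
      have tR: "t * R < r"
      proof -
        have "t * R \<le> r / (R + 1) * R" using R0 by (intro mult_right_mono) (auto simp: t_def)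
        also have "\<dots> < r" using r R0 by (simp add: field_simps)
        finally show ?thesis .
      qed
      define y where "y = restrict (\<lambda>i. (1 - t) * x i) {..<n}"
      have yint: "y \<in> etop n interior_of S" unfolding y_def using t0 t1 by (intro scale_in x) auto
      have "edist n x y = L2_set (\<lambda>i. t * x i) {..<n}"
        unfolding edist_L2 y_def by (intro L2_set_cong) (auto simp: algebra_simps)
      also have "\<dots> = t * R" unfolding R_def using t0 by (simp add: L2_set_right_distrib)
      finally have "edist n x y < r" using tR by simp
      moreover have "y \<in> Rn n" by (simp add: y_def Rn_def)
      ultimately show "\<exists>y\<in>M.mtopology interior_of S. y \<in> M.mball x r" using yint xR by (auto simp: etop_def)
    qed
  qed
  moreover have "etop n closure_of (etop n interior_of S) \<subseteq> S"
    by (rule closure_of_minimal[OF interior_of_subset closed])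
  ultimately show ?thesis unfolding compact_body_def using S_sub S_compact z by blast
qed

end



context body begin

definition T2 :: "real \<Rightarrow> real \<Rightarrow> bool" where "T2 a b \<longleftrightarrow> \<bar>a\<bar> \<le> L \<and> \<bar>b\<bar> \<le> g \<bar>a\<bar>"

definition Q2 :: "(real \<times> real) set" where
  "Q2 = {p. \<forall>y0 y1 t. T2 y0 y1 \<and> 0 \<le> t \<and> t \<le> 1 \<longrightarrow> T2 ((1-t) * fst p + t * y0) ((1-t) * snd p + t * y1)}"

lemma S_T2: "S = {x \<in> Rn n. \<forall>i\<in>{1..<n}. T2 (x 0) (x i)}"
  using n2 by (auto simp: S_def T2_def Ball_def)

lemma kernel_eq: "kernel n S = {x \<in> S. \<forall>i\<in>{1..<n}. (x 0, x i) \<in> Q2}"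
proof
  show "kernel n S \<subseteq> {x \<in> S. \<forall>i\<in>{1..<n}. (x 0, x i) \<in> Q2}"
  proof
    fix x assume xk: "x \<in> kernel n S"
    then have xS: "x \<in> S" and seg: "\<And>y. y \<in> S \<Longrightarrow> segment n x y \<subseteq> S" by (auto simp: kernel_def)
    have "(x 0, x i) \<in> Q2" if i: "i \<in> {1..<n}" for i
      unfolding Q2_def
    proof (intro CollectI allI impI, clarify)
      fix y0 y1 t :: real assume T: "T2 y0 y1" and t0: "0 \<le> t" and t1: "t \<le> 1"
      define y where "y = restrict (\<lambda>j. if j = 0 then y0 else if j = i then y1 else 0) {..<n}"
      have "y \<in> S" unfolding S_def Rn_def y_def using T i n0 g_pos[of "\<bar>y0\<bar>"] by (auto simp: T2_def)
      then have "segment n x y \<subseteq> S" by (rule seg)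
      moreover have "restrict (\<lambda>j. (1 - t) * x j + t * y j) {..<n} \<in> segment n x y"
        unfolding segment_def using t0 t1 by blast
      ultimately have p: "restrict (\<lambda>j. (1 - t) * x j + t * y j) {..<n} \<in> S" by blast
      have i0: "i \<noteq> 0" "i < n" using i by auto
      have "T2 (restrict (\<lambda>j. (1 - t) * x j + t * y j) {..<n} 0) (restrict (\<lambda>j. (1 - t) * x j + t * y j) {..<n} i)"
        using p i unfolding S_T2 by blast
      then show "T2 ((1 - t) * fst (x 0, x i) + t * y0) ((1 - t) * snd (x 0, x i) + t * y1)"
        using i0 n0 by (simp add: y_def)
    qed
    then show "x \<in> {x \<in> S. \<forall>i\<in>{1..<n}. (x 0, x i) \<in> Q2}" using xS by blast
  qed
  show "{x \<in> S. \<forall>i\<in>{1..<n}. (x 0, x i) \<in> Q2} \<subseteq> kernel n S"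
  proof
    fix x assume x: "x \<in> {x \<in> S. \<forall>i\<in>{1..<n}. (x 0, x i) \<in> Q2}"
    then have xS: "x \<in> S" and xQ: "\<And>i. i \<in> {1..<n} \<Longrightarrow> (x 0, x i) \<in> Q2" by auto
    have "segment n x y \<subseteq> S" if yS: "y \<in> S" for y
    proof
      fix p assume "p \<in> segment n x y"
      then obtain t where t: "0 \<le> t" "t \<le> 1" and p: "p = restrict (\<lambda>j. (1 - t) * x j + t * y j) {..<n}"
        by (auto simp: segment_def)
      have yT: "T2 (y 0) (y i)" if "i \<in> {1..<n}" for i using yS that by (simp add: S_T2)
      have "T2 (p 0) (p i)" if i: "i \<in> {1..<n}" for i
        using xQ[OF i] yT[OF i] t i n0 unfolding Q2_def p by auto
      then show "p \<in> S" unfolding S_T2 using p by (simp add: Rn_def)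
    qed
    then show "x \<in> kernel n S" using xS by (simp add: kernel_def)
  qed
qed

lemma Q2_closed: "closed Q2"
proof -
  have "Q2 = (\<Inter>w\<in>{w. T2 (fst w) (fst (snd w)) \<and> 0 \<le> snd (snd w) \<and> snd (snd w) \<le> 1}.
      {p. \<bar>(1 - snd (snd w)) * fst p + snd (snd w) * fst w\<bar> \<le> L} \<inter>
      {p. \<bar>(1 - snd (snd w)) * snd p + snd (snd w) * fst (snd w)\<bar> \<le>
          1 + m * max 0 (\<bar>(1 - snd (snd w)) * fst p + snd (snd w) * fst w\<bar> - c)})"
    unfolding Q2_def by (auto simp: T2_def g_def)
  also have "closed \<dots>"
    by (intro closed_INT ballI closed_Int closed_Collect_le continuous_intros)
  finally show ?thesis .
qed

lemma T2_closed: "closed {p. T2 (fst p) (snd p)}"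
proof -
  have "{p. T2 (fst p) (snd p)} = {p. \<bar>fst p\<bar> \<le> L} \<inter> {p. \<bar>snd p\<bar> \<le> 1 + m * max 0 (\<bar>fst p\<bar> - c)}"
    by (auto simp: T2_def g_def)
  also have "closed \<dots>" by (intro closed_Int closed_Collect_le continuous_intros)
  finally show ?thesis .
qed

lemma S_sets: "S \<in> sets (Pi\<^sub>M {..<n} (\<lambda>_. lborel))"
proof -
  have [measurable]: "{p. T2 (fst p) (snd p)} \<in> sets borel" by (rule borel_closed[OF T2_closed])
  have "S = {x \<in> space (Pi\<^sub>M {..<n} (\<lambda>_. lborel)). \<forall>i\<in>{1..<n}. (x 0, x i) \<in> {p. T2 (fst p) (snd p)}}"
    by (auto simp: S_T2 Rn_def space_PiM)
  also have "\<dots> \<in> sets (Pi\<^sub>M {..<n} (\<lambda>_. lborel))"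
  proof -
    have [measurable]: "0 \<in> {..<n}" using n0 by simp
    have [measurable]: "Measurable.pred (Pi\<^sub>M {..<n} (\<lambda>_. lborel)) (\<lambda>x. \<forall>i\<in>{1..<n}. (x 0, x i) \<in> {p. T2 (fst p) (snd p)})"
    proof (rule pred_intros_finite(3))
      fix i assume "i \<in> {1..<n}"
      then have [measurable]: "i \<in> {..<n}" by simp
      show "Measurable.pred (Pi\<^sub>M {..<n} (\<lambda>_. lborel)) (\<lambda>x. (x 0, x i) \<in> {p. T2 (fst p) (snd p)})"
        by measurable
    qed simp
    show ?thesis by measurable
  qed
  finally show ?thesis .
qed

lemma kernel_sets: "kernel n S \<in> sets (Pi\<^sub>M {..<n} (\<lambda>_. lborel))"
proof -
  have [measurable]: "Q2 \<in> sets borel" by (rule borel_closed[OF Q2_closed])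
  have [measurable]: "S \<in> sets (Pi\<^sub>M {..<n} (\<lambda>_. lborel))" by (rule S_sets)
  have "kernel n S = {x \<in> space (Pi\<^sub>M {..<n} (\<lambda>_. lborel)). x \<in> S \<and> (\<forall>i\<in>{1..<n}. (x 0, x i) \<in> Q2)}"
    unfolding kernel_eq using S_sub by (auto simp: Rn_def space_PiM)
  also have "\<dots> \<in> sets (Pi\<^sub>M {..<n} (\<lambda>_. lborel))"
  proof -
    have [measurable]: "0 \<in> {..<n}" using n0 by simp
    have [measurable]: "Measurable.pred (Pi\<^sub>M {..<n} (\<lambda>_. lborel)) (\<lambda>x. \<forall>i\<in>{1..<n}. (x 0, x i) \<in> Q2)"
    proof (rule pred_intros_finite(3))
      fix i assume "i \<in> {1..<n}"
      then have [measurable]: "i \<in> {..<n}" by simp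
      show "Measurable.pred (Pi\<^sub>M {..<n} (\<lambda>_. lborel)) (\<lambda>x. (x 0, x i) \<in> Q2)"
        by measurable
    qed simp
    show ?thesis by measurable
  qed
  finally show ?thesis .
qed

lemma Q2_K:
  assumes a: "\<bar>a\<bar> \<le> c" and b: "\<bar>b\<bar> \<le> 1 - 2 * m * c"
  shows "(a, b) \<in> Q2"
  unfolding Q2_def
proof (intro CollectI allI impI, clarify)
  fix y0 y1 t :: real assume T: "T2 y0 y1" and t0: "0 \<le> t" and t1: "t \<le> 1"
  have y0: "\<bar>y0\<bar> \<le> L" and y1: "\<bar>y1\<bar> \<le> g \<bar>y0\<bar>" using T by (auto simp: T2_def)
  define p0 where "p0 = (1 - t) * a + t * y0"
  define p1 where "p1 = (1 - t) * b + t * y1"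
  have A1: "\<bar>p0\<bar> \<le> (1 - t) * \<bar>a\<bar> + t * \<bar>y0\<bar>"
    unfolding p0_def using t0 t1 abs_triangle_ineq[of "(1-t)*a" "t*y0"] by (simp add: abs_mult)
  have "t * y0 = p0 - (1 - t) * a" by (simp add: p0_def)
  then have "\<bar>t * y0\<bar> \<le> \<bar>p0\<bar> + \<bar>(1 - t) * a\<bar>" using abs_triangle_ineq4[of p0 "(1-t)*a"] by simp
  then have A2: "\<bar>p0\<bar> \<ge> t * \<bar>y0\<bar> - (1 - t) * \<bar>a\<bar>" using t0 t1 by (simp add: abs_mult)
  have B1: "\<bar>p1\<bar> \<le> (1 - t) * \<bar>b\<bar> + t * \<bar>y1\<bar>"
    unfolding p1_def using t0 t1 abs_triangle_ineq[of "(1-t)*b" "t*y1"] by (simp add: abs_mult)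
  have a': "(1 - t) * \<bar>a\<bar> \<le> (1 - t) * c" using a t1 by (intro mult_left_mono) auto
  have cL': "(1 - t) * c \<le> (1 - t) * L" using cL t1 by (intro mult_left_mono) auto
  have y0': "t * \<bar>y0\<bar> \<le> t * L" using y0 t0 by (intro mult_left_mono) auto
  have b': "(1 - t) * \<bar>b\<bar> \<le> (1 - t) * (1 - 2 * m * c)" using b t1 by (intro mult_left_mono) auto
  have y1': "t * \<bar>y1\<bar> \<le> t * g \<bar>y0\<bar>" using y1 t0 by (intro mult_left_mono) auto
  have p0L: "\<bar>p0\<bar> \<le> L" using A1 a' cL' y0' by (simp add: algebra_simps)
  have mc0: "0 \<le> m * c" using m0 c0 by simp
  have "\<bar>p1\<bar> \<le> g \<bar>p0\<bar>"
  proof (cases "\<bar>y0\<bar> \<le> c")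
    case True
    then have "g \<bar>y0\<bar> = 1" by (simp add: g_def)
    then have "\<bar>p1\<bar> \<le> (1 - t) * (1 - 2 * m * c) + t" using B1 b' y1' by simp
    also have "\<dots> \<le> 1" using t1 mc0 mult_nonneg_nonneg[of "1-t" "m*c"] by (simp add: algebra_simps)
    also have "\<dots> \<le> g \<bar>p0\<bar>" by (rule g_ge1)
    finally show ?thesis .
  next
    case False
    then have gy: "g \<bar>y0\<bar> = 1 + m * (\<bar>y0\<bar> - c)" by (simp add: g_def)
    have gp: "g \<bar>p0\<bar> \<ge> 1 + m * (\<bar>p0\<bar> - c)" using m0 by (simp add: g_def mult_left_mono)
    have "m * \<bar>p0\<bar> \<ge> m * (t * \<bar>y0\<bar> - (1 - t) * c)"
      using A2 a' m0 by (intro mult_left_mono) auto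
    then have "1 + m * (\<bar>p0\<bar> - c) \<ge> (1 - t) * (1 - 2 * m * c) + t * (1 + m * (\<bar>y0\<bar> - c))"
      by (simp add: algebra_simps)
    moreover have "\<bar>p1\<bar> \<le> (1 - t) * (1 - 2 * m * c) + t * (1 + m * (\<bar>y0\<bar> - c))"
      using B1 b' y1' gy by simp
    ultimately show ?thesis using gp by linarith
  qed
  then show "T2 ((1 - t) * fst (a, b) + t * y0) ((1 - t) * snd (a, b) + t * y1)"
    using p0L unfolding T2_def p0_def p1_def by simp
qed

definition K where "K = {x \<in> Rn n. \<bar>x 0\<bar> \<le> c \<and> (\<forall>i\<in>{1..<n}. \<bar>x i\<bar> \<le> 1 - 2 * m * c)}"

lemma K_sub: "K \<subseteq> kernel n S"
proof
  fix x assume x: "x \<in> K"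
  then have xR: "x \<in> Rn n" and x0: "\<bar>x 0\<bar> \<le> c" and xi: "\<And>i. i \<in> {1..<n} \<Longrightarrow> \<bar>x i\<bar> \<le> 1 - 2 * m * c"
    by (auto simp: K_def)
  have mc0: "0 \<le> m * c" using m0 c0 by simp
  have "\<bar>x i\<bar> \<le> g \<bar>x 0\<bar>" if "i \<in> {1..<n}" for i using xi[OF that] g_ge1[of "\<bar>x 0\<bar>"] mc0 by linarith
  then have "x \<in> S" using xR x0 cL by (auto simp: S_def)
  then show "x \<in> kernel n S" unfolding kernel_eq using Q2_K[OF x0 xi] by blast
qed

lemma zero_K: "restrict (\<lambda>_. 0) {..<n} \<in> K"
  using c0 mc n0 unfolding K_def Rn_def by auto

lemma kernel_ne: "kernel n S \<noteq> {}" using zero_K K_sub by blast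

lemma S_star: "star_body n S" unfolding star_body_def using S_compact_body kernel_ne by blast

lemma S_sym: "centrally_symmetric n S"
  unfolding centrally_symmetric_def
proof
  let ?f = "\<lambda>x. restrict (\<lambda>i. - x i) {..<n}"
  have fS: "?f x \<in> S" if "x \<in> S" for x using that n0 by (auto simp: S_def Rn_def)
  show "S \<subseteq> ?f ` S"
  proof
    fix x assume x: "x \<in> S"
    then have xR: "x \<in> Rn n" by (simp add: S_def)
    have "?f (?f x) = x" by (rule Rn_ext[OF _ xR]) (auto simp: Rn_def)
    then show "x \<in> ?f ` S" using fS[OF x] by (metis image_eqI)
  qed
  show "?f ` S \<subseteq> S" using fS by blast
qed

end



lemma slab_emeasure:
  fixes h :: "real \<Rightarrow> real" and a b :: real
  assumes n2: "2 \<le> n" and hc: "continuous_on UNIV h" and h0: "\<And>t. a \<le> t \<Longrightarrow> t \<le> b \<Longrightarrow> 0 \<le> h t"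
  shows "emeasure (Pi\<^sub>M {..<n} (\<lambda>_. lborel)) {x \<in> Rn n. a \<le> x 0 \<and> x 0 \<le> b \<and> (\<forall>i\<in>{1..<n}. \<bar>x i\<bar> \<le> h (x 0))}
       = (\<integral>\<^sup>+ t. ennreal ((2 * h t) ^ (n - 1)) * indicator {a..b} t \<partial>lborel)"
proof -
  let ?M = "\<lambda>I. Pi\<^sub>M I (\<lambda>_::nat. lborel :: real measure)"
  let ?A = "{x \<in> Rn n. a \<le> x 0 \<and> x 0 \<le> b \<and> (\<forall>i\<in>{1..<n}. \<bar>x i\<bar> \<le> h (x 0))}"
  define W where "W = {p. a \<le> fst p \<and> fst p \<le> b \<and> \<bar>snd p\<bar> \<le> h (fst p)}"
  have Wc: "closed W" unfolding W_def
    by (intro closed_Collect_conj closed_Collect_le continuous_intros continuous_on_compose2[OF hc]) auto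
  have [measurable]: "W \<in> sets borel" by (rule borel_closed[OF Wc])
  have Aeq: "?A = {x \<in> space (?M {..<n}). \<forall>i\<in>{1..<n}. (x 0, x i) \<in> W}"
    using n2 by (auto simp: W_def Rn_def space_PiM Ball_def)
  have Am: "?A \<in> sets (?M {..<n})"
  proof -
    have [measurable]: "0 \<in> {..<n}" using n2 by simp
    have [measurable]: "Measurable.pred (?M {..<n}) (\<lambda>x. \<forall>i\<in>{1..<n}. (x 0, x i) \<in> W)"
    proof (rule pred_intros_finite(3))
      fix i assume "i \<in> {1..<n}"
      then have [measurable]: "i \<in> {..<n}" by simp
      show "Measurable.pred (?M {..<n}) (\<lambda>x. (x 0, x i) \<in> W)" by measurable
    qed simp
    show ?thesis unfolding Aeq by measurable
  qed
  interpret product_sigma_finite "\<lambda>_::nat. lborel" by standard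
  have ins: "{..<n} = insert 0 {1..<n}" using n2 by auto
  have "emeasure (?M {..<n}) ?A = (\<integral>\<^sup>+ x. indicator ?A x \<partial>?M {..<n})"
    using Am by (simp add: nn_integral_indicator)
  also have "\<dots> = (\<integral>\<^sup>+ x. indicator ?A x \<partial>?M (insert 0 {1..<n}))" by (simp only: ins)
  also have "\<dots> = (\<integral>\<^sup>+ y. (\<integral>\<^sup>+ x. indicator ?A (x(0 := y)) \<partial>?M {1..<n}) \<partial>lborel)"
  proof -
    have Am': "?A \<in> sets (?M (insert 0 {1..<n}))" by (subst ins[symmetric]) (rule Am)
    show ?thesis by (intro product_nn_integral_insert_rev borel_measurable_indicator Am') auto
  qed
  also have "\<dots> = (\<integral>\<^sup>+ y. indicator {a..b} y * emeasure (?M {1..<n}) (PiE {1..<n} (\<lambda>_. {- h y..h y})) \<partial>lborel)"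
  proof (rule nn_integral_cong)
    fix y :: real
    have eq: "(\<integral>\<^sup>+ x. indicator ?A (x(0 := y)) \<partial>?M {1..<n}) =
          (\<integral>\<^sup>+ x. indicator {a..b} y * indicator (PiE {1..<n} (\<lambda>_. {- h y..h y})) x \<partial>?M {1..<n})"
    proof (rule nn_integral_cong)
      fix x :: "nat \<Rightarrow> real" assume "x \<in> space (?M {1..<n})"
      then have x: "x \<in> PiE {1..<n} (\<lambda>_. UNIV)" by (simp add: space_PiM)
      have xe: "x \<in> extensional {1..<n}" using x by (simp add: PiE_def)
      have "x(0 := y) \<in> ?A \<longleftrightarrow> y \<in> {a..b} \<and> x \<in> PiE {1..<n} (\<lambda>_. {- h y..h y})"
      proof
        assume A: "x(0 := y) \<in> ?A"
        then have ab: "a \<le> y" "y \<le> b" by auto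
        from A have "\<forall>i\<in>{1..<n}. \<bar>(x(0:=y)) i\<bar> \<le> h ((x(0:=y)) 0)" by blast
        then have hi: "\<And>i. i \<in> {1..<n} \<Longrightarrow> \<bar>x i\<bar> \<le> h y" by auto
        have "x i \<in> {- h y..h y}" if "i \<in> {1..<n}" for i using hi[OF that] unfolding atLeastAtMost_iff abs_le_iff by linarith
        then have "x \<in> PiE {1..<n} (\<lambda>_. {- h y..h y})" using xe by (simp add: PiE_iff)
        then show "y \<in> {a..b} \<and> x \<in> PiE {1..<n} (\<lambda>_. {- h y..h y})" using ab by simp
      next
        assume B: "y \<in> {a..b} \<and> x \<in> PiE {1..<n} (\<lambda>_. {- h y..h y})"
        then have ab: "a \<le> y" "y \<le> b" and xb: "\<And>i. i \<in> {1..<n} \<Longrightarrow> x i \<in> {- h y..h y}"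
          by (auto simp: PiE_iff)
        have hi: "\<bar>(x(0:=y)) i\<bar> \<le> h ((x(0:=y)) 0)" if "i \<in> {1..<n}" for i
        proof -
          have "i \<noteq> 0" using that by simp
          then show ?thesis using xb[OF that] unfolding fun_upd_other[OF \<open>i \<noteq> 0\<close>] fun_upd_same atLeastAtMost_iff abs_le_iff by linarith
        qed
        have "x(0 := y) \<in> Rn n" unfolding Rn_def PiE_def
        proof (intro IntI)
          show "x(0 := y) \<in> Pi {..<n} (\<lambda>_. UNIV)" by simp
          show "x(0 := y) \<in> extensional {..<n}"
            using xe n2 by (auto simp: extensional_def)
        qed
        then show "x(0 := y) \<in> ?A" using ab hi by simp
      qed
      note iff = this
      show "indicator ?A (x(0 := y)) = (indicator {a..b} y * indicator (PiE {1..<n} (\<lambda>_. {- h y..h y})) x :: ennreal)"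
        unfolding indicator_def by (simp only: iff) simp
    qed
    also have "\<dots> = indicator {a..b} y * emeasure (?M {1..<n}) (PiE {1..<n} (\<lambda>_. {- h y..h y}))"
      by (subst nn_integral_cmult_indicator) auto
    finally show "(\<integral>\<^sup>+ x. indicator ?A (x(0 := y)) \<partial>?M {1..<n}) = indicator {a..b} y * emeasure (?M {1..<n}) (PiE {1..<n} (\<lambda>_. {- h y..h y}))" .
  qed
  also have "\<dots> = (\<integral>\<^sup>+ t. ennreal ((2 * h t) ^ (n - 1)) * indicator {a..b} t \<partial>lborel)"
  proof (rule nn_integral_cong)
    fix y :: real
    show "indicator {a..b} y * emeasure (?M {1..<n}) (PiE {1..<n} (\<lambda>_. {- h y..h y})) = ennreal ((2 * h y) ^ (n - 1)) * indicator {a..b} y"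
    proof (cases "y \<in> {a..b}")
      case True
      then have hy: "0 \<le> h y" using h0 by auto
      have "emeasure (?M {1..<n}) (PiE {1..<n} (\<lambda>_. {- h y..h y})) = (\<Prod>i\<in>{1..<n}. emeasure lborel {- h y..h y})"
        by (rule emeasure_PiM) auto
      also have "\<dots> = (\<Prod>i\<in>{1..<n}. ennreal (2 * h y))" using hy by simp
      also have "\<dots> = ennreal (2 * h y) ^ (n - 1)" by (simp only: prod_constant card_atLeastLessThan)
      also have "\<dots> = ennreal ((2 * h y) ^ (n - 1))" using hy by (intro ennreal_power) simp
      finally have E: "emeasure (?M {1..<n}) (PiE {1..<n} (\<lambda>_. {- h y..h y})) = ennreal ((2 * h y) ^ (n - 1))" .
      show ?thesis by (simp only: E indicator_simps(1)[OF True] mult_1 mult_1_right)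
    qed simp
  qed
  finally show ?thesis .
qed




context body begin

definition G where "G = 1 + m * (L - c)"
definition P where "P = (G ^ n - 1) / (m * n)"

lemma g_meas[measurable]: "g \<in> borel_measurable borel"
  by (rule borel_measurable_continuous_onI[OF g_cont])

lemma gabs_cont: "continuous_on UNIV (\<lambda>t. g \<bar>t\<bar>)"
  by (intro continuous_on_compose2[OF g_cont] continuous_intros) auto

lemma int_right: "(\<integral>\<^sup>+ t. ennreal ((2 * g \<bar>t\<bar>) ^ (n - 1)) * indicator {c..L} t \<partial>lborel) = ennreal (2 ^ (n - 1) * P)"
proof -
  define f where "f t = 2 ^ (n - 1) * (1 + m * (t - c)) ^ (n - 1)" for t
  define F where "F t = 2 ^ (n - 1) * (1 + m * (t - c)) ^ n / (m * n)" for t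
  have [measurable]: "f \<in> borel_measurable borel" unfolding f_def
    by (intro borel_measurable_continuous_onI continuous_intros)
  have "(\<integral>\<^sup>+ t. ennreal ((2 * g \<bar>t\<bar>) ^ (n - 1)) * indicator {c..L} t \<partial>lborel) =
        (\<integral>\<^sup>+ t. ennreal (f t) * indicator {c..L} t \<partial>lborel)"
  proof (rule nn_integral_cong)
    fix t :: real
    show "ennreal ((2 * g \<bar>t\<bar>) ^ (n - 1)) * indicator {c..L} t = ennreal (f t) * indicator {c..L} t"
    proof (cases "t \<in> {c..L}")
      case True
      then have "g \<bar>t\<bar> = 1 + m * (t - c)" using c0 by (simp add: g_def)
      then have "(2 * g \<bar>t\<bar>) ^ (n - 1) = f t" by (simp only: f_def power_mult_distrib)
      then show ?thesis by (simp only:)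
    qed simp
  qed
  also have "\<dots> = ennreal (F L - F c)"
  proof (rule nn_integral_FTC_Icc)
    fix x :: real assume "x \<in> {c..L}"
    then have x: "c \<le> x" by simp
    show "0 \<le> f x" unfolding f_def using x m0 by simp
    have "((\<lambda>t. 2 ^ (n - 1) * (1 + m * (t - c)) ^ n / (m * n)) has_real_derivative
           2 ^ (n - 1) * (real n * (1 + m * (x - c)) ^ (n - 1) * m) / (m * n)) (at x)"
      by (auto intro!: derivative_eq_intros)
    moreover have "2 ^ (n - 1) * (real n * (1 + m * (x - c)) ^ (n - 1) * m) / (m * n) = f x"
      using m0 n0 by (simp add: f_def field_simps)
    ultimately show "(F has_real_derivative f x) (at x)" unfolding F_def by simp
  qed (use cL in auto)
  also have "F L - F c = 2 ^ (n - 1) * P"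
    using m0 n0 by (simp add: F_def P_def G_def field_simps)
  finally show ?thesis .
qed

lemma int_left: "(\<integral>\<^sup>+ t. ennreal ((2 * g \<bar>t\<bar>) ^ (n - 1)) * indicator {-L..-c} t \<partial>lborel) = ennreal (2 ^ (n - 1) * P)"
proof -
  define f where "f t = 2 ^ (n - 1) * (1 + m * (- t - c)) ^ (n - 1)" for t
  define F where "F t = - (2 ^ (n - 1) * (1 + m * (- t - c)) ^ n / (m * n))" for t
  have [measurable]: "f \<in> borel_measurable borel" unfolding f_def
    by (intro borel_measurable_continuous_onI continuous_intros)
  have "(\<integral>\<^sup>+ t. ennreal ((2 * g \<bar>t\<bar>) ^ (n - 1)) * indicator {-L..-c} t \<partial>lborel) =
        (\<integral>\<^sup>+ t. ennreal (f t) * indicator {-L..-c} t \<partial>lborel)"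
  proof (rule nn_integral_cong)
    fix t :: real
    show "ennreal ((2 * g \<bar>t\<bar>) ^ (n - 1)) * indicator {-L..-c} t = ennreal (f t) * indicator {-L..-c} t"
    proof (cases "t \<in> {-L..-c}")
      case True
      then have "g \<bar>t\<bar> = 1 + m * (- t - c)" using c0 by (simp add: g_def)
      then have "(2 * g \<bar>t\<bar>) ^ (n - 1) = f t" by (simp only: f_def power_mult_distrib)
      then show ?thesis by (simp only:)
    qed simp
  qed
  also have "\<dots> = ennreal (F (-c) - F (-L))"
  proof (rule nn_integral_FTC_Icc)
    fix x :: real assume "x \<in> {-L..-c}"
    then have x: "x \<le> -c" by simp
    show "0 \<le> f x" unfolding f_def using x m0 by simp
    have "((\<lambda>t. - (2 ^ (n - 1) * (1 + m * (- t - c)) ^ n / (m * n))) has_real_derivative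
           - (2 ^ (n - 1) * (real n * (1 + m * (- x - c)) ^ (n - 1) * (m * (- 1))) / (m * n))) (at x)"
      by (auto intro!: derivative_eq_intros)
    moreover have "- (2 ^ (n - 1) * (real n * (1 + m * (- x - c)) ^ (n - 1) * (m * (- 1))) / (m * n)) = f x"
      using m0 n0 by (simp add: f_def field_simps)
    ultimately show "(F has_real_derivative f x) (at x)" unfolding F_def by simp
  qed (use cL in auto)
  also have "F (-c) - F (-L) = 2 ^ (n - 1) * P"
    using m0 n0 by (simp add: F_def P_def G_def field_simps)
  finally show ?thesis .
qed

lemma int_mid: "(\<integral>\<^sup>+ t. ennreal ((2 * g \<bar>t\<bar>) ^ (n - 1)) * indicator {-c..c} t \<partial>lborel) = ennreal (2 ^ (n - 1) * (2 * c))"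
proof -
  have "(\<integral>\<^sup>+ t. ennreal ((2 * g \<bar>t\<bar>) ^ (n - 1)) * indicator {-c..c} t \<partial>lborel) =
        (\<integral>\<^sup>+ t. ennreal (2 ^ (n - 1)) * indicator {-c..c} t \<partial>lborel)"
  proof (rule nn_integral_cong)
    fix t :: real
    show "ennreal ((2 * g \<bar>t\<bar>) ^ (n - 1)) * indicator {-c..c} t = ennreal (2 ^ (n - 1)) * indicator {-c..c} t"
    proof (cases "t \<in> {-c..c}")
      case True
      then have "\<bar>t\<bar> \<le> c" by auto
      then have "g \<bar>t\<bar> = 1" by (simp add: g_def max_def)
      then show ?thesis by simp
    qed simp
  qed
  also have "\<dots> = ennreal (2 ^ (n - 1)) * emeasure lborel {-c..c}"
    by (rule nn_integral_cmult_indicator) simp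
  also have "\<dots> = ennreal (2 ^ (n - 1) * (2 * c))" using c0 by (simp add: ennreal_mult)
  finally show ?thesis .
qed

end



lemma measure_le_of_emeasure: "emeasure M A \<le> ennreal r \<Longrightarrow> 0 \<le> r \<Longrightarrow> measure M A \<le> r"
  by (metis emeasure_eq_ennreal_measure ennreal_le_iff ennreal_neq_top neq_top_trans)

lemma measure_ge_of_emeasure: "ennreal r \<le> emeasure M A \<Longrightarrow> emeasure M A < \<infinity> \<Longrightarrow> r \<le> measure M A"
  by (metis emeasure_eq_ennreal_measure ennreal_le_iff2 less_irrefl measure_nonneg ennreal_le_iff less_le_trans top.extremum_strict)

context body begin

abbreviation "MM \<equiv> Pi\<^sub>M {..<n} (\<lambda>_. lborel :: real measure)"

lemma G_ge1: "G \<ge> 1" using m0 cL by (simp add: G_def)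
lemma G_gt1: "G > 1" using m0 cL by (simp add: G_def)
lemma P_pos: "P > 0"
proof -
  have "G ^ n > 1" using G_gt1 n0 by (simp add: one_less_power)
  then show ?thesis using m0 n0 by (simp add: P_def)
qed

lemma S_slab: "S = {x \<in> Rn n. -L \<le> x 0 \<and> x 0 \<le> L \<and> (\<forall>i\<in>{1..<n}. \<bar>x i\<bar> \<le> g \<bar>x 0\<bar>)}"
  by (auto simp: S_def abs_le_iff)

lemma slab_g: "emeasure MM {x \<in> Rn n. a \<le> x 0 \<and> x 0 \<le> b \<and> (\<forall>i\<in>{1..<n}. \<bar>x i\<bar> \<le> g \<bar>x 0\<bar>)}
   = (\<integral>\<^sup>+ t. ennreal ((2 * g \<bar>t\<bar>) ^ (n - 1)) * indicator {a..b} t \<partial>lborel)"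
  using slab_emeasure[OF n2 gabs_cont, of a b] g_pos by (simp add: less_imp_le)

lemma S_emeasure_le: "emeasure MM S \<le> ennreal (2 ^ (n - 1) * (2 * c + 2 * P))"
proof -
  let ?f = "\<lambda>t. ennreal ((2 * g \<bar>t\<bar>) ^ (n - 1))"
  have "emeasure MM S = (\<integral>\<^sup>+ t. ?f t * indicator {-L..L} t \<partial>lborel)"
    by (subst S_slab) (rule slab_g)
  also have "\<dots> \<le> (\<integral>\<^sup>+ t. (?f t * indicator {-L..-c} t + ?f t * indicator {-c..c} t) + ?f t * indicator {c..L} t \<partial>lborel)"
    by (intro nn_integral_mono) (auto simp: indicator_def)
  also have "\<dots> = (\<integral>\<^sup>+ t. ?f t * indicator {-L..-c} t + ?f t * indicator {-c..c} t \<partial>lborel) + (\<integral>\<^sup>+ t. ?f t * indicator {c..L} t \<partial>lborel)"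
    by (rule nn_integral_add) auto
  also have "\<dots> = ((\<integral>\<^sup>+ t. ?f t * indicator {-L..-c} t \<partial>lborel) + (\<integral>\<^sup>+ t. ?f t * indicator {-c..c} t \<partial>lborel)) + (\<integral>\<^sup>+ t. ?f t * indicator {c..L} t \<partial>lborel)"
    by (subst nn_integral_add) auto
  also have "\<dots> = ennreal (2 ^ (n - 1) * P) + ennreal (2 ^ (n - 1) * (2 * c)) + ennreal (2 ^ (n - 1) * P)"
    by (simp only: int_left int_mid int_right)
  also have "\<dots> = ennreal (2 ^ (n - 1) * (2 * c + 2 * P))"
    using P_pos c0 by (simp add: ennreal_plus[symmetric] algebra_simps del: ennreal_plus)
  finally show ?thesis .
qed

lemma S_fin: "emeasure MM S < \<infinity>"
  using S_emeasure_le by (simp add: le_less_trans)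

lemma half_neg: "ennreal (2 ^ (n - 1) * P) \<le> emeasure MM (S \<inter> {x. x 0 \<le> 0})"
proof -
  have "ennreal (2 ^ (n - 1) * P) = emeasure MM {x \<in> Rn n. -L \<le> x 0 \<and> x 0 \<le> -c \<and> (\<forall>i\<in>{1..<n}. \<bar>x i\<bar> \<le> g \<bar>x 0\<bar>)}"
    by (simp only: slab_g int_left)
  also have "\<dots> \<le> emeasure MM (S \<inter> {x. x 0 \<le> 0})"
  proof (rule emeasure_mono)
    show "{x \<in> Rn n. -L \<le> x 0 \<and> x 0 \<le> -c \<and> (\<forall>i\<in>{1..<n}. \<bar>x i\<bar> \<le> g \<bar>x 0\<bar>)} \<subseteq> S \<inter> {x. x 0 \<le> 0}"
      using c0 cL by (auto simp: S_slab)
    have [measurable]: "0 \<in> {..<n}" using n0 by simp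
    have "S \<inter> {x. x 0 \<le> 0} = S \<inter> {x \<in> space MM. x 0 \<le> 0}" using S_sub by (auto simp: Rn_def space_PiM)
    also have "\<dots> \<in> sets MM" using S_sets by measurable
    finally show "S \<inter> {x. x 0 \<le> 0} \<in> sets MM" .
  qed
  finally show ?thesis .
qed

lemma half_pos: "ennreal (2 ^ (n - 1) * P) \<le> emeasure MM (S \<inter> {x. x 0 \<ge> 0})"
proof -
  have "ennreal (2 ^ (n - 1) * P) = emeasure MM {x \<in> Rn n. c \<le> x 0 \<and> x 0 \<le> L \<and> (\<forall>i\<in>{1..<n}. \<bar>x i\<bar> \<le> g \<bar>x 0\<bar>)}"
    by (simp only: slab_g int_right)
  also have "\<dots> \<le> emeasure MM (S \<inter> {x. x 0 \<ge> 0})"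
  proof (rule emeasure_mono)
    show "{x \<in> Rn n. c \<le> x 0 \<and> x 0 \<le> L \<and> (\<forall>i\<in>{1..<n}. \<bar>x i\<bar> \<le> g \<bar>x 0\<bar>)} \<subseteq> S \<inter> {x. x 0 \<ge> 0}"
      using c0 cL by (auto simp: S_slab)
    have [measurable]: "0 \<in> {..<n}" using n0 by simp
    have "S \<inter> {x. x 0 \<ge> 0} = S \<inter> {x \<in> space MM. x 0 \<ge> 0}" using S_sub by (auto simp: Rn_def space_PiM)
    also have "\<dots> \<in> sets MM" using S_sets by measurable
    finally show "S \<inter> {x. x 0 \<ge> 0} \<in> sets MM" .
  qed
  finally show ?thesis .
qed

lemma vol_S_le: "vol n S \<le> 2 ^ (n - 1) * (2 * c + 2 * P)"
  unfolding vol_def using S_emeasure_le P_pos c0 by (intro measure_le_of_emeasure) auto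

lemma fin_sub: "A \<subseteq> S \<Longrightarrow> emeasure MM A < \<infinity>"
proof -
  assume "A \<subseteq> S"
  then have "emeasure MM A \<le> emeasure MM S" by (rule emeasure_mono[OF _ S_sets])
  then show ?thesis using S_fin by (rule le_less_trans)
qed

lemma vol_neg: "vol n (S \<inter> {x. x 0 \<le> 0}) \<ge> 2 ^ (n - 1) * P"
  unfolding vol_def by (intro measure_ge_of_emeasure half_neg fin_sub) auto

lemma vol_pos: "vol n (S \<inter> {x. x 0 \<ge> 0}) \<ge> 2 ^ (n - 1) * P"
  unfolding vol_def by (intro measure_ge_of_emeasure half_pos fin_sub) auto

lemma vol_S_ge: "vol n S \<ge> 2 ^ (n - 1) * P"
proof -
  have "ennreal (2 ^ (n - 1) * P) \<le> emeasure MM S"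
    using half_neg S_sets by (meson emeasure_mono inf_le1 order_trans)
  then show ?thesis unfolding vol_def by (intro measure_ge_of_emeasure fin_sub) auto
qed

end



context body begin

lemma hyp_image: "(\<lambda>x. restrict x {1..<n}) ` {x \<in> S. x 0 = 0} = PiE {1..<n} (\<lambda>_. {-1..1})"
proof
  have g0: "g 0 = 1" using c0 by (simp add: g_def)
  show "(\<lambda>x. restrict x {1..<n}) ` {x \<in> S. x 0 = 0} \<subseteq> PiE {1..<n} (\<lambda>_. {-1..1})"
  proof
    fix z assume "z \<in> (\<lambda>x. restrict x {1..<n}) ` {x \<in> S. x 0 = 0}"
    then obtain x where x: "x \<in> S" "x 0 = 0" and z: "z = restrict x {1..<n}" by blast
    have "x i \<in> {-1..1}" if "i \<in> {1..<n}" for i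
    proof -
      have "\<bar>x i\<bar> \<le> g \<bar>x 0\<bar>" using x that by (auto simp: S_def)
      then have "\<bar>x i\<bar> \<le> 1" using x g0 by simp
      then show ?thesis unfolding atLeastAtMost_iff abs_le_iff by linarith
    qed
    then show "z \<in> PiE {1..<n} (\<lambda>_. {-1..1})" unfolding z by (simp add: PiE_iff)
  qed
  show "PiE {1..<n} (\<lambda>_. {-1..1}) \<subseteq> (\<lambda>x. restrict x {1..<n}) ` {x \<in> S. x 0 = 0}"
  proof
    fix z :: "nat \<Rightarrow> real" assume z: "z \<in> PiE {1..<n} (\<lambda>_. {-1..1})"
    define x where "x = z(0 := 0)"
    have ze: "z \<in> extensional {1..<n}" using z by (simp add: PiE_def)
    have xR: "x \<in> Rn n" unfolding Rn_def PiE_def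
    proof (intro IntI)
      show "x \<in> Pi {..<n} (\<lambda>_. UNIV)" by simp
      show "x \<in> extensional {..<n}" using ze n0 by (auto simp: extensional_def x_def)
    qed
    have "\<bar>x i\<bar> \<le> g \<bar>x 0\<bar>" if i: "i \<in> {1..<n}" for i
    proof -
      have "z i \<in> {-1..1}" using z i by (auto simp: PiE_iff)
      moreover have "x i = z i" "x 0 = 0" using i by (auto simp: x_def)
      ultimately show ?thesis using g0 unfolding atLeastAtMost_iff abs_le_iff by simp
    qed
    then have "x \<in> S" using xR L0 by (auto simp: S_def x_def)
    moreover have "x 0 = 0" by (simp add: x_def)
    moreover have "restrict x {1..<n} = z"
      using ze by (auto simp: x_def extensional_def fun_eq_iff)
    ultimately show "z \<in> (\<lambda>x. restrict x {1..<n}) ` {x \<in> S. x 0 = 0}" by force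
  qed
qed

lemma vol_hyp_eq: "vol_hyp n S = 2 ^ (n - 1)"
proof -
  interpret product_sigma_finite "\<lambda>_::nat. lborel :: real measure" by standard
  have "emeasure (Pi\<^sub>M {1..<n} (\<lambda>_. lborel :: real measure)) (PiE {1..<n} (\<lambda>_. {-1..1})) =
        (\<Prod>i\<in>{1..<n}. emeasure lborel {-1..1::real})"
    by (rule emeasure_PiM) auto
  also have "\<dots> = ennreal 2 ^ (n - 1)" by simp
  also have "\<dots> = ennreal (2 ^ (n - 1))" by (subst ennreal_power) auto
  finally show ?thesis unfolding vol_hyp_def hyp_image by (simp add: measure_def)
qed

definition q where "q = 1 - 2 * m * c"

lemma q_ge: "q \<ge> 1/2" using mc by (simp add: q_def)

lemma K_PiE: "K = PiE {..<n} (\<lambda>i. if i = 0 then {-c..c} else {-q..q})"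
proof
  show "K \<subseteq> PiE {..<n} (\<lambda>i. if i = 0 then {-c..c} else {-q..q})"
  proof
    fix x assume x: "x \<in> K"
    have "x i \<in> (if i = 0 then {-c..c} else {-q..q})" if "i < n" for i
    proof (cases "i = 0")
      case True then show ?thesis using x unfolding K_def atLeastAtMost_iff abs_le_iff by simp
    next
      case False
      then have "i \<in> {1..<n}" using that by simp
      then have "\<bar>x i\<bar> \<le> q" using x by (simp add: K_def q_def)
      then show ?thesis using False unfolding atLeastAtMost_iff abs_le_iff by simp
    qed
    moreover have "x \<in> extensional {..<n}" using x by (simp add: K_def Rn_def PiE_def)
    ultimately show "x \<in> PiE {..<n} (\<lambda>i. if i = 0 then {-c..c} else {-q..q})" by (simp add: PiE_iff)
  qed
  show "PiE {..<n} (\<lambda>i. if i = 0 then {-c..c} else {-q..q}) \<subseteq> K"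
  proof
    fix x assume x: "x \<in> PiE {..<n} (\<lambda>i. if i = 0 then {-c..c} else {-q..q})"
    have xR: "x \<in> Rn n" using x by (auto simp: Rn_def PiE_def)
    have "\<forall>i\<in>{..<n}. x i \<in> (if i = 0 then {-c..c} else {-q..q})" using x by (simp add: PiE_iff)
    then have "x 0 \<in> (if (0::nat) = 0 then {-c..c} else {-q..q})" using n0 by blast
    then have "x 0 \<in> {-c..c}" by simp
    then have x0: "\<bar>x 0\<bar> \<le> c" unfolding atLeastAtMost_iff abs_le_iff by linarith
    have "\<bar>x i\<bar> \<le> 1 - 2 * m * c" if i: "i \<in> {1..<n}" for i
    proof -
      have "\<forall>i\<in>{..<n}. x i \<in> (if i = 0 then {-c..c} else {-q..q})" using x by (simp add: PiE_iff)
      moreover have "i \<in> {..<n}" using i by simp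
      ultimately have "x i \<in> (if i = 0 then {-c..c} else {-q..q})" by (rule bspec)
      then have "x i \<in> {-q..q}" using i by simp
      then show ?thesis unfolding atLeastAtMost_iff abs_le_iff q_def by linarith
    qed
    then show "x \<in> K" using xR x0 by (simp add: K_def)
  qed
qed

lemma vol_kernel_ge: "vol n (kernel n S) \<ge> 2 * c * (2 * q) ^ (n - 1)"
proof -
  interpret product_sigma_finite "\<lambda>_::nat. lborel :: real measure" by standard
  have ins: "{..<n} = insert 0 {1..<n}" using n0 by auto
  have Ks: "K \<in> sets MM" unfolding K_PiE by (intro sets_PiM_I_finite) auto
  have "emeasure MM K = (\<Prod>i\<in>{..<n}. emeasure lborel (if i = 0 then {-c..c} else {-q..q}))"
    unfolding K_PiE by (rule emeasure_PiM) auto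
  also have "\<dots> = emeasure lborel {-c..c} * (\<Prod>i\<in>{1..<n}. emeasure lborel {-q..q})"
    by (subst ins) (simp add: prod.insert)
  also have "\<dots> = ennreal (2 * c) * ennreal (2 * q) ^ (n - 1)" using c0 q_ge by simp
  also have "\<dots> = ennreal (2 * c) * ennreal ((2 * q) ^ (n - 1))" using q_ge by (subst ennreal_power) auto
  also have "\<dots> = ennreal (2 * c * (2 * q) ^ (n - 1))" using c0 q_ge by (subst ennreal_mult) auto
  finally have eK: "emeasure MM K = ennreal (2 * c * (2 * q) ^ (n - 1))" .
  have "measure MM K \<le> measure MM (kernel n S)"
  proof (rule measure_mono_fmeasurable[OF K_sub Ks])
    have "kernel n S \<subseteq> S" by (auto simp: kernel_def)
    then show "kernel n S \<in> fmeasurable MM" using kernel_sets fin_sub by (simp add: fmeasurable_def)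
  qed
  moreover have "measure MM K = 2 * c * (2 * q) ^ (n - 1)" using eK c0 q_ge by (simp add: measure_def)
  ultimately show ?thesis by (simp add: vol_def)
qed

lemma g_le_G: "0 \<le> s \<Longrightarrow> s \<le> L \<Longrightarrow> g s \<le> G"
  using m0 cL by (auto simp: g_def G_def max_def intro!: mult_left_mono)

lemma edist_S: assumes x: "x \<in> S" and y: "y \<in> S" shows "edist n x y \<le> 2 * sqrt (L\<^sup>2 + (n - 1) * G\<^sup>2)"
proof -
  have x0: "\<bar>x 0\<bar> \<le> L" and y0: "\<bar>y 0\<bar> \<le> L" using x y by (auto simp: S_def)
  have "\<bar>x 0 - y 0\<bar> \<le> \<bar>2 * L\<bar>" using x0 y0 by arith
  then have "(x 0 - y 0)\<^sup>2 \<le> (2 * L)\<^sup>2" by (simp only: abs_le_square_iff)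
  moreover have "(x i - y i)\<^sup>2 \<le> (2 * G)\<^sup>2" if i: "i \<in> {1..<n}" for i
  proof -
    have "\<bar>x i\<bar> \<le> G" using x i g_le_G[of "\<bar>x 0\<bar>"] by (force simp: S_def)
    moreover have "\<bar>y i\<bar> \<le> G" using y i g_le_G[of "\<bar>y 0\<bar>"] by (force simp: S_def)
    ultimately have "\<bar>x i - y i\<bar> \<le> \<bar>2 * G\<bar>" by arith
    then show ?thesis by (simp only: abs_le_square_iff)
  qed
  ultimately have "(\<Sum>i<n. (x i - y i)\<^sup>2) \<le> (2 * L)\<^sup>2 + (\<Sum>i\<in>{1..<n}. (2 * G)\<^sup>2)"
  proof -
    assume a: "(x 0 - y 0)\<^sup>2 \<le> (2 * L)\<^sup>2" and b: "\<And>i. i \<in> {1..<n} \<Longrightarrow> (x i - y i)\<^sup>2 \<le> (2 * G)\<^sup>2"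
    have "(\<Sum>i<n. (x i - y i)\<^sup>2) = (x 0 - y 0)\<^sup>2 + (\<Sum>i\<in>{1..<n}. (x i - y i)\<^sup>2)"
      using n0 by (simp add: lessThan_atLeast0 sum.atLeast_Suc_lessThan)
    also have "\<dots> \<le> (2 * L)\<^sup>2 + (\<Sum>i\<in>{1..<n}. (2 * G)\<^sup>2)"
      using a b by (intro add_mono sum_mono) auto
    finally show ?thesis .
  qed
  also have "\<dots> = 4 * (L\<^sup>2 + (n - 1) * G\<^sup>2)" using n0 by (simp add: power_mult_distrib algebra_simps of_nat_diff)
  finally have "edist n x y \<le> sqrt (4 * (L\<^sup>2 + (n - 1) * G\<^sup>2))" unfolding edist_def by (rule real_sqrt_le_mono)
  also have "\<dots> = sqrt 4 * sqrt (L\<^sup>2 + (n - 1) * G\<^sup>2)" by (rule real_sqrt_mult)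
  also have "sqrt 4 = (2::real)" by (simp add: real_sqrt_eq_iff)
  finally show ?thesis .
qed

lemma Diam_bounds: "0 < Diam n S" "Diam n S \<le> 2 * sqrt (L\<^sup>2 + (n - 1) * G\<^sup>2)"
proof -
  let ?D = "{edist n x y | x y. x \<in> S \<and> y \<in> S}"
  define z where "z = restrict (\<lambda>_. 0::real) {..<n}"
  define e where "e = restrict (\<lambda>i. if i = 0 then L else 0) {..<n}"
  have zS: "z \<in> S" unfolding S_def z_def Rn_def using L0 n0 g_pos[of 0] by auto
  have eS: "e \<in> S" unfolding S_def e_def Rn_def using L0 n0 g_pos[of L] by auto
  have bd: "\<And>d. d \<in> ?D \<Longrightarrow> d \<le> 2 * sqrt (L\<^sup>2 + (n - 1) * G\<^sup>2)" using edist_S by blast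
  have ne: "?D \<noteq> {}" using zS by blast
  show "Diam n S \<le> 2 * sqrt (L\<^sup>2 + (n - 1) * G\<^sup>2)" unfolding Diam_def by (rule cSup_least[OF ne bd])
  have "edist n z e = L"
  proof -
    have "(\<Sum>i<n. (z i - e i)\<^sup>2) = (\<Sum>i<n. if i = 0 then L\<^sup>2 else 0)"
      by (intro sum.cong) (auto simp: z_def e_def)
    also have "\<dots> = L\<^sup>2" using n0 by simp
    finally show ?thesis using L0 by (simp add: edist_def)
  qed
  then have "L \<in> ?D" using zS eS by blast
  moreover have "bdd_above ?D" using bd by (rule bdd_aboveI)
  ultimately have "L \<le> Diam n S" unfolding Diam_def by (rule cSup_upper)
  then show "0 < Diam n S" using L0 by simp
qed

end



context body begin

lemma eta_ge: "eta n S \<ge> c * q ^ (n - 1) / (c + P)"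
proof -
  have V: "(2::real) ^ (n - 1) > 0" by simp
  have vS: "0 < vol n S" using vol_S_ge P_pos V by (smt (verit) mult_pos_pos)
  have q0: "q \<ge> 0" using q_ge by simp
  have "(2 * c * (2 * q) ^ (n - 1)) / (2 ^ (n - 1) * (2 * c + 2 * P)) = (2 ^ (n - 1) * 2) * (c * q ^ (n - 1)) / ((2 ^ (n - 1) * 2) * (c + P))"
    by (simp add: power_mult_distrib algebra_simps)
  also have "\<dots> = c * q ^ (n - 1) / (c + P)" by (rule mult_divide_mult_cancel_left) simp
  finally have "c * q ^ (n - 1) / (c + P) = (2 * c * (2 * q) ^ (n - 1)) / (2 ^ (n - 1) * (2 * c + 2 * P))" by simp
  also have "\<dots> \<le> vol n (kernel n S) / (2 ^ (n - 1) * (2 * c + 2 * P))"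
    using vol_kernel_ge c0 P_pos by (intro divide_right_mono) auto
  also have "\<dots> \<le> vol n (kernel n S) / vol n S"
    using vS vol_S_le by (intro divide_left_mono) (auto simp: vol_def)
  finally show ?thesis by (simp add: eta_def)
qed

lemma hyp_le:
  assumes A: "2 * sqrt (L\<^sup>2 + (n - 1) * G\<^sup>2) \<le> A * P" and A0: "0 \<le> A"
  shows "vol_hyp n S \<le> A / Diam n S * min (vol n (S \<inter> {x. x 0 \<le> 0})) (vol n (S \<inter> {x. x 0 \<ge> 0}))"
proof -
  define V :: real where "V = 2 ^ (n - 1)"
  have V0: "V > 0" by (simp add: V_def)
  define D where "D = Diam n S"
  have D0: "0 < D" and DD: "D \<le> 2 * sqrt (L\<^sup>2 + (n - 1) * G\<^sup>2)" using Diam_bounds by (auto simp: D_def)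
  have mn: "min (vol n (S \<inter> {x. x 0 \<le> 0})) (vol n (S \<inter> {x. x 0 \<ge> 0})) \<ge> V * P"
    using vol_neg vol_pos by (simp add: V_def)
  have "D \<le> A * P" using DD A by linarith
  then have "1 \<le> A * P / D" using D0 by simp
  then have "V * 1 \<le> V * (A * P / D)" using V0 by (intro mult_left_mono) auto
  then have "V \<le> V * (A * P / D)" by simp
  also have "\<dots> = A / D * (V * P)" by (simp add: field_simps)
  also have "\<dots> \<le> A / D * min (vol n (S \<inter> {x. x 0 \<le> 0})) (vol n (S \<inter> {x. x 0 \<ge> 0}))"
    using mn A0 D0 by (intro mult_left_mono) auto
  finally show ?thesis by (simp add: vol_hyp_eq V_def D_def)
qed

end



lemma fixed_n:
  fixes \<eta> :: real and n :: nat
  assumes \<eta>0: "0 < \<eta>" and \<eta>1: "\<eta> < 1" and nb: "2 * ln (1 / \<eta>) \<le> real n" and n2: "2 \<le> n"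
  defines "b \<equiv> ln (1 / \<eta>)"
  defines "\<epsilon> \<equiv> min (1/2) (1 / (16 * b))"
  defines "L \<equiv> sqrt (real n)"
  defines "c \<equiv> \<epsilon> * sqrt (real n)"
  defines "m \<equiv> (exp (b / real n) - 1) / (sqrt (real n) - \<epsilon> * sqrt (real n))"
  shows "star_body n (body.S n L m c) \<and> centrally_symmetric n (body.S n L m c) \<and>
         1/64 * \<eta> \<le> eta n (body.S n L m c) \<and>
         vol_hyp n (body.S n L m c) \<le> 20 * ((\<eta> * ln (1 / \<eta>)) / ((1 - \<eta>) * Diam n (body.S n L m c))) *
            min (vol n (body.S n L m c \<inter> {x. x 0 \<le> 0})) (vol n (body.S n L m c \<inter> {x. x 0 \<ge> 0}))"
proof -
  have b0: "b > 0" unfolding b_def using \<eta>0 \<eta>1 by (simp add: ln_gt_zero)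
  have b1: "b \<ge> 1 - \<eta>"
  proof -
    have "ln \<eta> \<le> \<eta> - 1" using \<eta>0 by (rule ln_le_minus_one)
    moreover have "b = - ln \<eta>" unfolding b_def using \<eta>0 by (simp add: ln_div)
    ultimately show ?thesis by simp
  qed
  have e0: "\<epsilon> > 0" unfolding \<epsilon>_def using b0 by simp
  have eh: "\<epsilon> \<le> 1/2" unfolding \<epsilon>_def by simp
  have eb: "\<epsilon> * b \<le> 1/16"
  proof -
    have "\<epsilon> \<le> 1 / (16 * b)" unfolding \<epsilon>_def by simp
    then have "\<epsilon> * b \<le> 1 / (16 * b) * b" using b0 by (intro mult_right_mono) auto
    then show ?thesis using b0 by simp
  qed
  have nr: "real n > 0" using n2 by simp
  define x where "x = b / real n"
  have x0: "x > 0" unfolding x_def using b0 nr by simp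
  have xh: "x \<le> 1/2" unfolding x_def using nb nr b_def by (simp add: divide_le_eq)
  have nx: "real n * x = b" unfolding x_def using nr by simp
  have ex1: "1 + x \<le> exp x" by simp
  have ex2: "exp x \<le> 1 + 2 * x"
  proof -
    have "exp x \<le> 1 + x + x\<^sup>2" using x0 xh by (intro exp_bound) auto
    moreover have "x\<^sup>2 \<le> x" using x0 xh by (simp add: power2_eq_square mult_le_cancel_left1)
    ultimately show ?thesis by simp
  qed
  have L0: "L > 0" unfolding L_def using nr by simp
  have L2: "L\<^sup>2 = real n" unfolding L_def using nr by simp
  have cdef: "c = \<epsilon> * L" unfolding c_def L_def by simp
  have Lc: "L - c = L * (1 - \<epsilon>)" by (simp add: cdef algebra_simps)
  have Lc0: "L - c > 0" using Lc L0 eh by simp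
  have mdef: "m = (exp x - 1) / (L - c)" unfolding m_def x_def L_def c_def by simp
  have m0: "m > 0" unfolding mdef using ex1 x0 Lc0 by simp
  have mL: "m * (L - c) = exp x - 1" unfolding mdef using Lc0 by simp
  have c0: "c > 0" unfolding cdef using e0 L0 by simp
  have cL: "c < L" using Lc0 by simp
  have mc_eq: "m * c = (exp x - 1) * (\<epsilon> / (1 - \<epsilon>))"
    unfolding mdef Lc cdef using L0 eh by (simp add: field_simps)
  have ee: "\<epsilon> / (1 - \<epsilon>) \<le> 2 * \<epsilon>" using e0 eh by (simp add: field_simps)
  have mc_le: "m * c \<le> 4 * \<epsilon> * x"
  proof -
    have "(exp x - 1) * (\<epsilon> / (1 - \<epsilon>)) \<le> (2 * x) * (2 * \<epsilon>)"
      using ex1 ex2 ee e0 eh x0 by (intro mult_mono) auto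
    then show ?thesis unfolding mc_eq by (simp add: ac_simps)
  qed
  have mcn: "real n * (m * c) \<le> 1/4"
  proof -
    have "real n * (m * c) \<le> real n * (4 * \<epsilon> * x)" using mc_le nr by simp
    also have "\<dots> = 4 * (\<epsilon> * b)" using nx by (simp add: algebra_simps)
    finally show ?thesis using eb by simp
  qed
  have mc: "m * c \<le> 1/4"
  proof -
    have "1 * (m * c) \<le> real n * (m * c)" using n2 m0 c0 by (intro mult_right_mono) auto
    then show ?thesis using mcn by simp
  qed
  interpret B: body n L m c using n2 c0 cL m0 mc by unfold_locales auto
  have G: "B.G = exp x" unfolding B.G_def using mL by simp
  have Gn: "B.G ^ n = 1 / \<eta>"
  proof -
    have "B.G ^ n = exp (real n * x)" unfolding G by (simp add: exp_of_nat_mult)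
    also have "\<dots> = exp b" by (simp only: nx)
    also have "\<dots> = 1 / \<eta>" unfolding b_def using \<eta>0 by (intro exp_ln) simp
    finally show ?thesis .
  qed
  have P: "B.P = (1 / \<eta> - 1) / (m * real n)" unfolding B.P_def Gn by (simp add: mult.commute)
  have mn_eq: "m * real n = real n * (exp x - 1) / (L * (1 - \<epsilon>))" unfolding mdef Lc by simp
  have nG1: "real n * (exp x - 1) \<ge> b"
  proof -
    have "x \<le> exp x - 1" using ex1 by linarith
    then have "real n * x \<le> real n * (exp x - 1)" using nr by (intro mult_left_mono) auto
    then show ?thesis using nx by simp
  qed
  have nG2: "real n * (exp x - 1) \<le> 2 * b"
  proof -
    have "real n * (exp x - 1) \<le> real n * (2 * x)" using ex2 nr by (intro mult_left_mono) auto
    then show ?thesis using nx by (simp add: algebra_simps)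
  qed
  have mn_lo: "m * real n \<ge> b / L"
  proof -
    have "b / L \<le> b / (L * (1 - \<epsilon>))" using b0 L0 e0 eh
      by (intro divide_left_mono) (auto simp: mult_le_cancel_left1)
    also have "\<dots> \<le> real n * (exp x - 1) / (L * (1 - \<epsilon>))" using nG1 L0 eh by (intro divide_right_mono) auto
    finally show ?thesis unfolding mn_eq .
  qed
  have mn_hi: "m * real n \<le> 4 * b / L"
  proof -
    have "real n * (exp x - 1) / (L * (1 - \<epsilon>)) \<le> 2 * b / (L * (1 - \<epsilon>))" using nG2 L0 eh by (intro divide_right_mono) auto
    also have "\<dots> \<le> 2 * b / (L * (1/2))" using b0 L0 eh by (intro divide_left_mono) auto
    also have "\<dots> = 4 * b / L" by simp
    finally show ?thesis unfolding mn_eq .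
  qed
  have mnp: "m * real n > 0" using m0 nr by simp
  have etaP: "\<eta> * B.P = (1 - \<eta>) / (m * real n)"
  proof -
    have e: "\<eta> * (1 / \<eta> - 1) = 1 - \<eta>" using \<eta>0 by (simp add: algebra_simps)
    show ?thesis unfolding P by (simp only: times_divide_eq_right e)
  qed
  have qb: "B.q ^ (n - 1) \<ge> 1/2"
  proof -
    have "1 + real (n - 1) * (- (2 * m * c)) \<le> (1 + (- (2 * m * c))) ^ (n - 1)"
      using mc by (intro Bernoulli_inequality) auto
    moreover have "real (n - 1) * (2 * (m * c)) \<le> real n * (2 * (m * c))"
      using m0 c0 by (intro mult_right_mono) auto
    ultimately show ?thesis using mcn unfolding B.q_def by (simp add: algebra_simps)
  qed
  have cP: "c / (c + B.P) \<ge> \<eta> / 16"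
  proof -
    have cPp: "c + B.P > 0" using c0 B.P_pos by simp
    have etaP_le: "\<eta> * B.P \<le> (1 - \<eta>) * L / b"
    proof -
      have "(1 - \<eta>) / (m * real n) \<le> (1 - \<eta>) / (b / L)"
        using \<eta>1 mn_lo b0 L0 mnp by (intro divide_left_mono) auto
      then show ?thesis unfolding etaP by simp
    qed
    have key: "\<eta> * \<epsilon> + (1 - \<eta>) / b \<le> 16 * \<epsilon>"
    proof (cases "1/2 \<le> 1 / (16 * b)")
      case True
      then have e: "\<epsilon> = 1/2" unfolding \<epsilon>_def by simp
      have "(1 - \<eta>) / b \<le> 1" using b1 b0 by simp
      then show ?thesis unfolding e using \<eta>1 by simp
    next
      case False
      then have e: "\<epsilon> = 1 / (16 * b)" unfolding \<epsilon>_def by simp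
      have "\<eta> * (1 / (16 * b)) + (1 - \<eta>) / b = (1 - \<eta> * 15 / 16) / b" using b0 by (simp add: field_simps)
      also have "\<dots> \<le> 1 / b" using \<eta>0 b0 by (intro divide_right_mono) auto
      also have "\<dots> = 16 * (1 / (16 * b))" by simp
      finally show ?thesis unfolding e .
    qed
    have "\<eta> * (c + B.P) \<le> \<eta> * c + (1 - \<eta>) * L / b" using etaP_le by (simp add: algebra_simps)
    also have "\<dots> = L * (\<eta> * \<epsilon> + (1 - \<eta>) / b)" unfolding cdef by (simp add: field_simps)
    also have "\<dots> \<le> L * (16 * \<epsilon>)" using key L0 by (intro mult_left_mono) auto
    also have "\<dots> = 16 * c" unfolding cdef by simp
    finally show ?thesis using cPp by (simp add: field_simps)
  qed
  have eta_b: "1/64 * \<eta> \<le> eta n B.S"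
  proof -
    have "1/64 * \<eta> \<le> 1/2 * (\<eta> / 16)" using \<eta>0 by simp
    also have "\<dots> \<le> B.q ^ (n - 1) * (c / (c + B.P))"
      using qb cP \<eta>0 by (intro mult_mono) auto
    also have "\<dots> = c * B.q ^ (n - 1) / (c + B.P)" by simp
    also have "\<dots> \<le> eta n B.S" by (rule B.eta_ge)
    finally show ?thesis .
  qed
  define A where "A = 20 * (\<eta> * b / (1 - \<eta>))"
  have A0: "A \<ge> 0" unfolding A_def using \<eta>0 \<eta>1 b0 by simp
  have AP: "A * B.P = 20 * b / (m * real n)"
  proof -
    have "A * B.P = 20 * b / (1 - \<eta>) * (\<eta> * B.P)" unfolding A_def using \<eta>1 by (simp add: field_simps)
    also have "\<dots> = 20 * b / (1 - \<eta>) * ((1 - \<eta>) / (m * real n))" by (simp only: etaP)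
    also have "\<dots> = 20 * b / (m * real n)" using \<eta>1 by simp
    finally show ?thesis .
  qed
  have AP5: "5 * L \<le> A * B.P"
  proof -
    have "20 * b / (4 * b / L) \<le> 20 * b / (m * real n)"
      using mn_hi mnp b0 L0 by (intro divide_left_mono) auto
    moreover have "20 * b / (4 * b / L) = 5 * L" using b0 L0 by (simp add: field_simps)
    ultimately show ?thesis unfolding AP by simp
  qed
  have Dm: "2 * sqrt (L\<^sup>2 + real (n - 1) * B.G\<^sup>2) \<le> 5 * L"
  proof -
    have G2: "B.G\<^sup>2 \<le> 4"
    proof -
      have "B.G \<le> 2" unfolding G using ex2 xh by simp
      moreover have "B.G \<ge> 0" using B.G_ge1 by simp
      ultimately have "B.G\<^sup>2 \<le> 2\<^sup>2" by (intro power_mono) auto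
      then show ?thesis by simp
    qed
    have "real (n - 1) * B.G\<^sup>2 \<le> real n * 4" using G2 by (intro mult_mono) auto
    then have "4 * (L\<^sup>2 + real (n - 1) * B.G\<^sup>2) \<le> (5 * L)\<^sup>2" using L2 by (simp add: power_mult_distrib)
    then have "sqrt (4 * (L\<^sup>2 + real (n - 1) * B.G\<^sup>2)) \<le> sqrt ((5 * L)\<^sup>2)" by (rule real_sqrt_le_mono)
    moreover have "sqrt (4 * (L\<^sup>2 + real (n - 1) * B.G\<^sup>2)) = 2 * sqrt (L\<^sup>2 + real (n - 1) * B.G\<^sup>2)"
      by (simp only: real_sqrt_mult) simp
    moreover have "sqrt ((5 * L)\<^sup>2) = 5 * L" using L0 by (simp only: real_sqrt_abs)
    ultimately show ?thesis by linarith
  qed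
  have hyp: "vol_hyp n B.S \<le> A / Diam n B.S * min (vol n (B.S \<inter> {x. x 0 \<le> 0})) (vol n (B.S \<inter> {x. x 0 \<ge> 0}))"
    using Dm AP5 A0 by (intro B.hyp_le) auto
  have "A / Diam n B.S = 20 * ((\<eta> * ln (1 / \<eta>)) / ((1 - \<eta>) * Diam n B.S))"
    unfolding A_def b_def by (simp add: field_simps)
  then show ?thesis using hyp eta_b B.S_star B.S_sym by simp
qed


theorem theorem3p1:
  shows "\<exists>C c :: real. C > 0 \<and> c > 0 \<and>
    (\<forall>\<eta>::real. 0 < \<eta> \<and> \<eta> < 1 \<longrightarrow>
      (\<exists>(S :: nat \<Rightarrow> (nat \<Rightarrow> real) set) (N :: nat). \<forall>n \<ge> N.
         star_body n (S n) \<and> centrally_symmetric n (S n) \<and>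
         eta n (S n) \<ge> c * \<eta> \<and>
         vol_hyp n (S n) \<le> C * ((\<eta> * ln (1 / \<eta>)) / ((1 - \<eta>) * Diam n (S n))) *
            min (vol n (S n \<inter> {x. x 0 \<le> 0})) (vol n (S n \<inter> {x. x 0 \<ge> 0}))))"
proof -
  have main: "\<exists>(S :: nat \<Rightarrow> (nat \<Rightarrow> real) set) (N :: nat). \<forall>n \<ge> N.
         star_body n (S n) \<and> centrally_symmetric n (S n) \<and>
         eta n (S n) \<ge> 1/64 * \<eta> \<and>
         vol_hyp n (S n) \<le> 20 * ((\<eta> * ln (1 / \<eta>)) / ((1 - \<eta>) * Diam n (S n))) *
            min (vol n (S n \<inter> {x. x 0 \<le> 0})) (vol n (S n \<inter> {x. x 0 \<ge> 0}))"
    if h: "0 < \<eta> \<and> \<eta> < 1" for \<eta> :: real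
  proof -
    have \<eta>0: "0 < \<eta>" and \<eta>1: "\<eta> < 1" using h by auto
    define b where "b = ln (1 / \<eta>)"
    define \<epsilon> where "\<epsilon> = min (1/2) (1 / (16 * b))"
    define S where "S = (\<lambda>n::nat. body.S n (sqrt (real n))
        ((exp (b / real n) - 1) / (sqrt (real n) - \<epsilon> * sqrt (real n))) (\<epsilon> * sqrt (real n)))"
    define N where "N = nat \<lceil>2 * b\<rceil> + 2"
    have all: "\<forall>n \<ge> N.
         star_body n (S n) \<and> centrally_symmetric n (S n) \<and>
         eta n (S n) \<ge> 1/64 * \<eta> \<and>
         vol_hyp n (S n) \<le> 20 * ((\<eta> * ln (1 / \<eta>)) / ((1 - \<eta>) * Diam n (S n))) *
            min (vol n (S n \<inter> {x. x 0 \<le> 0})) (vol n (S n \<inter> {x. x 0 \<ge> 0}))"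
    proof (intro allI impI)
      fix n assume nN: "N \<le> n"
      have n2: "2 \<le> n" using nN by (simp add: N_def)
      have a: "Suc (Suc (nat \<lceil>2 * b\<rceil>)) \<le> n" using nN by (simp add: N_def)
      have "2 * b \<le> of_int \<lceil>2 * b\<rceil>" by (rule le_of_int_ceiling)
      also have "\<dots> \<le> of_int (int (nat \<lceil>2 * b\<rceil>))" by simp
      also have "\<dots> = real (nat \<lceil>2 * b\<rceil>)" by (simp only: of_int_of_nat_eq)
      also have "\<dots> \<le> real n" using a by (intro of_nat_mono) linarith
      finally have nb: "2 * ln (1 / \<eta>) \<le> real n" by (simp add: b_def)
      show "star_body n (S n) \<and> centrally_symmetric n (S n) \<and>
           eta n (S n) \<ge> 1/64 * \<eta> \<and>
           vol_hyp n (S n) \<le> 20 * ((\<eta> * ln (1 / \<eta>)) / ((1 - \<eta>) * Diam n (S n))) *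
              min (vol n (S n \<inter> {x. x 0 \<le> 0})) (vol n (S n \<inter> {x. x 0 \<ge> 0}))"
        using fixed_n[OF \<eta>0 \<eta>1 nb n2] unfolding S_def \<epsilon>_def b_def by simp
    qed
    then show ?thesis by blast
  qed
  have "(20::real) > 0 \<and> (1/64::real) > 0 \<and>
    (\<forall>\<eta>::real. 0 < \<eta> \<and> \<eta> < 1 \<longrightarrow>
      (\<exists>(S :: nat \<Rightarrow> (nat \<Rightarrow> real) set) (N :: nat). \<forall>n \<ge> N.
         star_body n (S n) \<and> centrally_symmetric n (S n) \<and>
         eta n (S n) \<ge> 1/64 * \<eta> \<and>
         vol_hyp n (S n) \<le> 20 * ((\<eta> * ln (1 / \<eta>)) / ((1 - \<eta>) * Diam n (S n))) *
            min (vol n (S n \<inter> {x. x 0 \<le> 0})) (vol n (S n \<inter> {x. x 0 \<ge> 0}))))"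
    using main by simp
  then show ?thesis by blast
qed

end
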